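(* For an integer $k\ge0$ and real $\alpha>k$, $$\sum_{n=1}^\infty\frac{H_{n+\alpha}}{(n+k)(n+\alpha)}=\frac{H_{\alpha-k}^2+H_{\alpha-k}^{(2)}}{\alpha-k}-\sum_{j=1}^k\frac{H_{\alpha+j-k}}{j(\alpha+j-k)}.$$
   Context: Shifted harmonic numbers: for a real $\alpha$ that is not a negative integer, $H_\alpha := \sum_{k=1}^\infty\left(\frac1k-\frac1{k+\alpha}\right)$ and, for integers $m\ge 2$, $H_\alpha^{(m)} := \sum_{k=1}^\infty\left(\frac1{k^m}-\frac1{(k+\alpha)^m}\right)=\zeta(m)-\zeta(m,\alpha+1)$, where $\zeta$ is the Riemann zeta function and $\zeta(s,\alpha+1)=\sum_{n=1}^\infty (n+\alpha)^{-s}$ is the Hurwitz zeta function. Powers such as $H_\alpha^2$ mean $(H_\alpha)^2$. Empty sums are $0$. *)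

theory Defs
  imports "HOL-Analysis.Analysis"
begin

definition shifted_harmonic :: "real \<Rightarrow> real" where
  "shifted_harmonic a = (\<Sum>k. 1 / real (k + 1) - 1 / (real (k + 1) + a))"

definition shifted_harmonic_gen :: "nat \<Rightarrow> real \<Rightarrow> real" where
  "shifted_harmonic_gen m a = (\<Sum>k. 1 / real (k + 1) ^ m - 1 / (real (k + 1) + a) ^ m)"

end

theory Submission
  imports Defs "HOL-Real_Asymp.Real_Asymp"
begin

lemma frac_cross:
  fixes a b c d :: real
  assumes "b > 0" "d > 0" "a * d \<le> c * b"
  shows "a / b \<le> c / d"
proof -
  have e1: "a / b = (a * d) / (b * d)" using assms by simp
  have e2: "c / d = (c * b) / (b * d)" using assms by simp
  show ?thesis unfolding e1 e2 using assms by (intro divide_right_mono) auto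
qed


lemma sum_inv_sq: "summable (\<lambda>k. 1 / real (k+1) ^ 2)"
proof -
  have "summable (\<lambda>n. inverse (real n ^ 2))" by (rule inverse_power_summable) simp
  hence "summable (\<lambda>n. inverse (real (Suc n) ^ 2))" by (subst summable_Suc_iff)
  thus ?thesis by (simp add: inverse_eq_divide)
qed

lemma H_sums:
  assumes "z \<ge> 0"
  shows "(\<lambda>k. 1 / real (k+1) - 1 / (real (k+1) + z)) sums shifted_harmonic z"
proof -
  have s: "summable (\<lambda>k. 1 / real (k+1) - 1 / (real (k+1) + z))"
  proof (rule summable_comparison_test')
    show "summable (\<lambda>k. z * (1 / real (k+1) ^ 2))" using sum_inv_sq by (rule summable_mult)
    fix n :: nat
    have e: "1 / real (n+1) - 1 / (real (n+1) + z) = z / (real (n+1) * (real (n+1) + z))"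
      using assms by (simp add: field_simps)
    have "z / (real (n+1) * (real (n+1) + z)) \<le> z / (real (n+1) * real (n+1))"
      using assms by (intro divide_left_mono mult_left_mono) auto
    hence le: "z / (real (n+1) * (real (n+1) + z)) \<le> z * (1 / real (n+1) ^ 2)"
      by (simp add: power2_eq_square)
    have nn: "z / (real (n+1) * (real (n+1) + z)) \<ge> 0" using assms by simp
    show "norm (1 / real (n+1) - 1 / (real (n+1) + z)) \<le> z * (1 / real (n+1) ^ 2)"
      unfolding e real_norm_def abs_of_nonneg[OF nn] by (rule le)
  qed
  thus ?thesis unfolding shifted_harmonic_def by (rule summable_sums)
qed

lemma H_d:
  assumes "z \<ge> 0"
  shows "(\<lambda>k. z / (real (k+1) * (real (k+1) + z))) sums shifted_harmonic z"
proof -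
  have "\<And>n. 1 / real (n+1) - 1 / (real (n+1) + z) = z / (real (n+1) * (real (n+1) + z))"
      using assms by (simp add: field_simps)
  thus ?thesis using H_sums[OF assms] by simp
qed

lemma H_nonneg: "z \<ge> 0 \<Longrightarrow> shifted_harmonic z \<ge> 0"
  by (rule sums_le[OF _ sums_zero H_d[of z]]) simp_all

lemma H_shift1:
  assumes "z \<ge> 0"
  shows "shifted_harmonic (z + 1) = shifted_harmonic z + 1 / (z + 1)"
proof -
  have "(\<lambda>k. (1 / real (k+1) - 1 / (real (k+1) + z)) - (1 / real (k+1) - 1 / (real (k+1) + (z+1))))
     sums (shifted_harmonic z - shifted_harmonic (z+1))"
    using assms by (intro sums_diff H_sums) auto
  moreover have "(\<lambda>k. 1 / (real (Suc k) + 1 + z) - 1 / (real k + 1 + z)) sums (0 - 1 / (real 0 + 1 + z))"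
    by (rule telescope_sums) real_asymp
  ultimately show ?thesis
    by (simp add: sums_iff add_ac)
qed

lemma H_shiftn:
  assumes "z \<ge> 0"
  shows "shifted_harmonic (real n + z) = shifted_harmonic z + (\<Sum>i<n. 1 / (real i + 1 + z))"
proof (induction n)
  case 0 then show ?case by simp
next
  case (Suc n)
  have "shifted_harmonic (real (Suc n) + z) = shifted_harmonic ((real n + z) + 1)"
    by (simp add: add_ac)
  also have "\<dots> = shifted_harmonic (real n + z) + 1 / (real n + z + 1)"
    using assms by (intro H_shift1) auto
  finally show ?case using Suc by (simp add: add_ac)
qed

lemma H2_sums:
  assumes "z \<ge> 0"
  shows "(\<lambda>k. 1 / real (k+1) ^ 2 - 1 / (real (k+1) + z) ^ 2) sums shifted_harmonic_gen 2 z"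
proof -
  have "summable (\<lambda>k. 1 / (real (k+1) + z) ^ 2)"
  proof (rule summable_comparison_test'[OF sum_inv_sq])
    fix n :: nat
    have "1 / (real (n+1) + z) ^ 2 \<le> 1 / real (n+1) ^ 2"
      using assms by (intro divide_left_mono power_mono mult_pos_pos) auto
    thus "norm (1 / (real (n+1) + z) ^ 2) \<le> 1 / real (n+1) ^ 2" by simp
  qed
  hence "summable (\<lambda>k. 1 / real (k+1) ^ 2 - 1 / (real (k+1) + z) ^ 2)"
    by (intro summable_diff sum_inv_sq)
  thus ?thesis unfolding shifted_harmonic_gen_def by (rule summable_sums)
qed

lemma H2_shift1:
  assumes "z \<ge> 0"
  shows "shifted_harmonic_gen 2 (z + 1) = shifted_harmonic_gen 2 z + 1 / (z + 1) ^ 2"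
proof -
  have "(\<lambda>k. (1 / real (k+1) ^ 2 - 1 / (real (k+1) + z) ^ 2) - (1 / real (k+1) ^ 2 - 1 / (real (k+1) + (z+1)) ^ 2))
     sums (shifted_harmonic_gen 2 z - shifted_harmonic_gen 2 (z+1))"
    using assms by (intro sums_diff H2_sums) auto
  moreover have "(\<lambda>k. 1 / (real (Suc k) + 1 + z) ^ 2 - 1 / (real k + 1 + z) ^ 2) sums (0 - 1 / (real 0 + 1 + z) ^ 2)"
    by (rule telescope_sums) real_asymp
  ultimately show ?thesis
    by (simp add: sums_iff add_ac)
qed

definition Zc :: real where "Zc = (\<Sum>k. 1 / real (k+1) ^ 2)"

lemma H2_bounds:
  assumes "z \<ge> 0"
  shows "0 \<le> shifted_harmonic_gen 2 z" "shifted_harmonic_gen 2 z \<le> Zc"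
proof -
  have t: "0 \<le> 1 / real (k+1) ^ 2 - 1 / (real (k+1) + z) ^ 2" for k
    using assms by (simp add: divide_left_mono power_mono)
  show "0 \<le> shifted_harmonic_gen 2 z"
    by (rule sums_le[OF _ sums_zero H2_sums[OF assms]]) (rule t)
  show "shifted_harmonic_gen 2 z \<le> Zc" unfolding Zc_def
    by (rule sums_le[OF _ H2_sums[OF assms] summable_sums[OF sum_inv_sq]]) (use assms in simp)
qed

lemma H2_ratio:
  assumes "0 < x" "x \<le> y"
  shows "shifted_harmonic_gen 2 x \<le> shifted_harmonic_gen 2 y"
        "shifted_harmonic_gen 2 y \<le> (y/x)^2 * shifted_harmonic_gen 2 x"
proof -
  have t1: "1 / real (k+1) ^ 2 - 1 / (real (k+1) + x) ^ 2 \<le> 1 / real (k+1) ^ 2 - 1 / (real (k+1) + y) ^ 2" for k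
    using assms by (simp add: divide_left_mono power_mono)
  have t2: "1 / real (k+1) ^ 2 - 1 / (real (k+1) + y) ^ 2 \<le> (y/x)^2 * (1 / real (k+1) ^ 2 - 1 / (real (k+1) + x) ^ 2)" for k
  proof -
    define K where "K = real (k+1)"
    have K: "K > 0" unfolding K_def by simp
    have e: "1 / K ^ 2 - 1 / (K + z) ^ 2 = z * (2*K+z) / (K^2 * (K+z)^2)" if "z \<ge> 0" for z
    proof -
      have "K + z > 0" "K > 0" using K that by auto
      hence "1 / K ^ 2 - 1 / (K + z) ^ 2 = ((K+z)^2 - K^2) / (K^2 * (K+z)^2)"
        by (simp add: diff_frac_eq)
      also have "(K+z)^2 - K^2 = z*(2*K+z)" by (simp add: power2_eq_square algebra_simps)
      finally show ?thesis .
    qed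
    have "x*(2*K) \<le> y*(2*K)" using assms K by (intro mult_right_mono) auto
    hence a1: "x * (2*K+y) \<le> y * (2*K+x)" by (simp add: algebra_simps)
    have a2: "(K+x)^2 \<le> (K+y)^2" using assms K by (intro power_mono) auto
    have "x * (2*K+y) * (K+x)^2 \<le> y * (2*K+x) * (K+y)^2"
      by (rule mult_mono[OF a1 a2]) (use assms K in auto)
    define P where "P = x*K^2*(K+x)^2*(K+y)^2"
    have P: "P > 0" unfolding P_def using assms K by auto
    have kx: "K + x \<noteq> 0" "K + y \<noteq> 0" "x \<noteq> 0" "K \<noteq> 0" using assms K by auto
    have q1: "y * (2*K+y) / (K^2 * (K+y)^2) = (x * (2*K+y) * (K+x)^2) * (y / P)"
      unfolding P_def using kx by (simp add: field_simps; simp add: algebra_simps power2_eq_square)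
    have q2: "(y/x)^2 * (x * (2*K+x) / (K^2 * (K+x)^2)) = (y * (2*K+x) * (K+y)^2) * (y / P)"
      unfolding P_def using kx by (simp add: field_simps; simp add: algebra_simps power2_eq_square)
    have "y * (2*K+y) / (K^2 * (K+y)^2) \<le> (y/x)^2 * (x * (2*K+x) / (K^2 * (K+x)^2))"
      unfolding q1 q2 using P assms by (intro mult_right_mono) (auto simp: \<open>x * (2*K+y) * (K+x)^2 \<le> y * (2*K+x) * (K+y)^2\<close>)
    thus ?thesis using e[of x] e[of y] assms unfolding K_def by simp
  qed
  show "shifted_harmonic_gen 2 x \<le> shifted_harmonic_gen 2 y"
    by (rule sums_le[OF _ H2_sums[of x] H2_sums[of y]]) (use assms t1 in auto)
  show "shifted_harmonic_gen 2 y \<le> (y/x)^2 * shifted_harmonic_gen 2 x"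
    by (rule sums_le[OF _ H2_sums[of y] sums_mult[OF H2_sums[of x]]]) (use assms t2 in auto)
qed

lemma H2_small:
  assumes "0 < e" "e \<le> 1"
  shows "shifted_harmonic_gen 2 e \<le> 4 * e * shifted_harmonic_gen 2 1"
proof -
  have t: "1 / real (k+1) ^ 2 - 1 / (real (k+1) + e) ^ 2 \<le> (4*e) * (1 / real (k+1) ^ 2 - 1 / (real (k+1) + 1) ^ 2)" for k
  proof -
    define K where "K = real (k+1)"
    have K: "K \<ge> 1" unfolding K_def by simp
    have e: "1 / K ^ 2 - 1 / (K + z) ^ 2 = z * (2*K+z) / (K^2 * (K+z)^2)" if "z \<ge> 0" for z
    proof -
      have "K + z > 0" "K > 0" using K that by auto
      hence "1 / K ^ 2 - 1 / (K + z) ^ 2 = ((K+z)^2 - K^2) / (K^2 * (K+z)^2)"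
        by (simp add: diff_frac_eq)
      also have "(K+z)^2 - K^2 = z*(2*K+z)" by (simp add: power2_eq_square algebra_simps)
      finally show ?thesis .
    qed
    have "e * (2*K+e) / (K^2 * (K+e)^2) \<le> e * (2*K+1) / (K^2 * K^2)"
    proof (rule frac_le)
      show "e * (2*K+e) \<le> e * (2*K+1)" using assms by (intro mult_left_mono) auto
      show "0 \<le> e * (2*K+1)" using assms K by simp
      show "0 < K^2 * K^2" using K by simp
      have "K^2 \<le> (K+e)^2" using K assms by (intro power_mono) auto
      thus "K^2 * K^2 \<le> K^2 * (K+e)^2" by (intro mult_left_mono) auto
    qed
    also have "\<dots> \<le> (4*e) * (1 * (2*K+1) / (K^2 * (K+1)^2))"
    proof -
      have "K*1 \<le> K*K" using K by (intro mult_left_mono) auto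
      moreover have "(K+1)^2 = K*K + 2*K + 1" "4*K^2 = 4*(K*K)" by (simp_all add: power2_eq_square algebra_simps)
      ultimately have "(K+1)^2 \<le> 4 * K^2" using K by linarith
      hence h4: "(K+1)^2 / 4 \<le> K^2" by simp
      have "K^2 * ((K+1)^2 / 4) \<le> K^2 * K^2" by (rule mult_left_mono[OF h4]) simp
      hence le: "K^2 * (K+1)^2 / 4 \<le> K^2*K^2" by simp
      have q: "(4*e) * (1 * (2*K+1) / (K^2 * (K+1)^2)) = e * (2*K+1) / (K^2 * (K+1)^2 / 4)"
        by simp
      have "e * (2*K+1) / (K^2 * K^2) \<le> e * (2*K+1) / (K^2 * (K+1)^2 / 4)"
        by (rule frac_le) (use le assms K in auto)
      thus ?thesis unfolding q .
    qed
    finally show ?thesis using e[of e] e[of 1] assms unfolding K_def by simp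
  qed
  show ?thesis
    by (rule sums_le[OF _ H2_sums[of e] sums_mult[OF H2_sums[of 1]]]) (use assms t in auto)
qed



lemma lim_inv_sq: "(a::real) > 0 \<Longrightarrow> (\<lambda>N. 1/(real N + 1 + a)^2) \<longlonglongrightarrow> 0"
  by real_asymp

lemma harm_over: "(\<lambda>N. harm N / (real N + 1) :: real) \<longlonglongrightarrow> 0"
proof -
  have "(\<lambda>N. (harm N - ln (real N)) * (1 / (real N + 1)) + ln (real N) / (real N + 1) :: real) \<longlonglongrightarrow> euler_mascheroni * 0 + 0"
    by (intro tendsto_intros euler_mascheroni_LIMSEQ) real_asymp+
  moreover have "(harm N - ln (real N)) * (1 / (real N + 1)) + ln (real N) / (real N + 1) = harm N / (real N + 1)" for N
  proof -
    have "(harm N - ln (real N)) * (1 / (real N + 1)) + ln (real N) / (real N + 1)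
        = (harm N - ln (real N)) / (real N + 1) + ln (real N) / (real N + 1)" by simp
    also have "\<dots> = ((harm N - ln (real N)) + ln (real N)) / (real N + 1)"
      by (rule add_divide_distrib[symmetric])
    finally show ?thesis by simp
  qed
  ultimately show ?thesis by simp
qed

lemma hb_partial:
  "(\<Sum>k\<le>n. harm (k+1) / (real (k+1) * real (k+2)) :: real) = (\<Sum>k\<le>n. 1 / real (k+1) ^ 2) - harm (n+1) / real (n+2)"
proof (induction n)
  case 0 then show ?case by (simp add: harm_def)
next
  case (Suc n)
  have h: "(harm (n+2) :: real) = harm (n+1) + 1 / real (n+2)"
    using harm_Suc[of "n+1"] by (simp add: inverse_eq_divide)
  define p where "p = real (n+2)"
  define hh where "hh = (harm (n+1) :: real)"
  have p: "p > 0" unfolding p_def by simp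
  have pf: "1/(p*(p+1)) = 1/p - 1/(p+1)" using diff_frac_eq[of p "p+1" 1 1] p by simp
  have a1: "(hh + 1/p) / (p * (p+1)) = (hh + 1/p) * (1/(p*(p+1)))" by simp
  also have "\<dots> = (hh + 1/p) * (1/p - 1/(p+1))" unfolding pf ..
  also have "\<dots> = (hh + 1/p) * (1/p) - (hh + 1/p)/(p+1)" by (simp add: right_diff_distrib)
  finally have a1: "(hh + 1/p) / (p * (p+1)) = (hh + 1/p) * (1/p) - (hh + 1/p)/(p+1)" .
  have a2: "(hh + 1/p) * (1/p) = hh/p + 1/p^2" by (simp add: add_divide_distrib power2_eq_square)
  have alg: "- (hh/p) + (hh + 1/p) / (p * (p+1)) = 1/p^2 - (hh + 1/p)/(p+1)"
    using a1 a2 by linarith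
  have l: "(\<Sum>k\<le>Suc n. harm (k+1) / (real (k+1) * real (k+2)) :: real)
      = (\<Sum>k\<le>n. harm (k+1) / (real (k+1) * real (k+2))) + (hh + 1/p) / (p * (p+1))"
    unfolding sum.atMost_Suc hh_def p_def using h by simp
  have r: "(\<Sum>k\<le>Suc n. 1 / real (k+1) ^ 2) - harm (Suc n+1) / real (Suc n+2)
      = (\<Sum>k\<le>n. 1 / real (k+1) ^ 2) + 1/p^2 - (hh + 1/p)/(p+1)"
    unfolding sum.atMost_Suc hh_def p_def using h by simp
  show ?case unfolding l r using Suc alg unfolding hh_def p_def by linarith
qed

lemma hb_summable: "summable (\<lambda>k. harm (k+1) / (real (k+1) * real (k+2)) :: real)"
proof (rule bounded_imp_summable)
  show "0 \<le> (harm (k+1) :: real) / (real (k+1) * real (k+2))" for k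
    by (intro divide_nonneg_nonneg harm_nonneg) auto
  fix n
  have "(\<Sum>k\<le>n. 1 / real (k+1) ^ 2) \<le> Zc" unfolding Zc_def
    using sum_inv_sq by (intro sum_le_suminf) auto
  moreover have "harm (n+1) / real (n+2) \<ge> (0::real)" by (intro divide_nonneg_nonneg harm_nonneg) auto
  ultimately show "(\<Sum>k\<le>n. harm (k+1) / (real (k+1) * real (k+2)) :: real) \<le> Zc"
    unfolding hb_partial by linarith
qed

definition Tn :: "real \<Rightarrow> nat \<Rightarrow> real" where "Tn a n = (\<Sum>i<n. 1 / (real i + 1 + a))"
definition dn :: "real \<Rightarrow> nat \<Rightarrow> real" where "dn a n = a / (real (n+1) * (real (n+1) + a))"
definition atm :: "real \<Rightarrow> nat \<Rightarrow> real" where "atm a n = Tn a (n+1) * dn a n"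
definition gt :: "real \<Rightarrow> nat \<Rightarrow> real" where
  "gt a n = shifted_harmonic (real (n+1) + a) / (real (n+1) * (real (n+1) + a))"
definition Aa :: "real \<Rightarrow> real" where "Aa a = suminf (atm a)"
definition Gs :: "real \<Rightarrow> real" where "Gs a = suminf (gt a)"

lemma Tn_nonneg: "a \<ge> 0 \<Longrightarrow> Tn a n \<ge> 0"
  unfolding Tn_def by (intro sum_nonneg) auto

lemma Tn_le_harm: "a \<ge> 0 \<Longrightarrow> Tn a n \<le> harm n"
  unfolding Tn_def harm_altdef
  by (intro sum_mono) (auto simp: inverse_eq_divide intro!: divide_left_mono)

lemma dn_nonneg: "a \<ge> 0 \<Longrightarrow> dn a n \<ge> 0"
  unfolding dn_def by simp

lemma dn_le: "a \<ge> 0 \<Longrightarrow> dn a n \<le> (a+1) * (1 / (real (n+1) * real (n+2)))"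
proof -
  assume a: "a \<ge> 0"
  define N where "N = real (n+1)"
  have N: "N \<ge> 1" "real (n+2) = N + 1" unfolding N_def by auto
  define P where "P = N * (N+a) * (N+1)"
  have P: "P > 0" unfolding P_def using N a by auto
  have nz: "N \<noteq> 0" "N + a \<noteq> 0" "N + 1 \<noteq> 0" using N a by auto
  have "a * (N+1) \<le> (a+1) * (N+a)" using N a by (simp add: algebra_simps)
  hence "N * (a * (N+1)) \<le> N * ((a+1) * (N+a))" by (rule mult_left_mono) (use N in auto)
  hence "a * (N * (N+1)) \<le> (a+1) * (N * (N+a))" by (simp add: ac_simps)
  hence "a / (N * (N+a)) \<le> (a+1) / (N * (N+1))" using N a by (intro frac_cross) auto
  hence "a / (N * (N+a)) \<le> (a+1) * (1 / (N * (N+1)))" by simp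
  thus ?thesis unfolding dn_def N_def[symmetric] N(2) .
qed

lemma at_nonneg: "a \<ge> 0 \<Longrightarrow> atm a n \<ge> 0"
  unfolding atm_def using Tn_nonneg dn_nonneg by simp

lemma at_summable: assumes "a \<ge> 0" shows "summable (atm a)"
proof (rule summable_comparison_test'[OF summable_mult[OF hb_summable, of "a+1"]])
  fix n
  have "atm a n \<le> harm (n+1) * ((a+1) * (1 / (real (n+1) * real (n+2))))"
    unfolding atm_def using assms Tn_le_harm dn_le dn_nonneg harm_nonneg
    by (intro mult_mono) auto
  thus "norm (atm a n) \<le> (a+1) * (harm (n+1) / (real (n+1) * real (n+2)))"
    using at_nonneg[OF assms] by (simp add: field_simps)
qed

lemma H_Tn: "a \<ge> 0 \<Longrightarrow> shifted_harmonic (real n + a) = shifted_harmonic a + Tn a n"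
  unfolding Tn_def using H_shiftn by simp

lemma aG_sums:
  assumes "a > 0"
  shows "(\<lambda>n. a * gt a n) sums (shifted_harmonic a * shifted_harmonic a + Aa a)"
proof -
  have e: "a * gt a n = shifted_harmonic a * dn a n + atm a n" for n
  proof -
    have "a * gt a n = shifted_harmonic (real (n+1) + a) * dn a n"
      unfolding gt_def dn_def by simp
    also have "\<dots> = shifted_harmonic a * dn a n + atm a n"
      unfolding H_Tn[OF less_imp_le[OF assms], of "n+1"] atm_def by (simp add: algebra_simps)
    finally show ?thesis .
  qed
  have "(\<lambda>n. shifted_harmonic a * dn a n + atm a n) sums (shifted_harmonic a * shifted_harmonic a + Aa a)"
    unfolding Aa_def
    by (intro sums_add sums_mult summable_sums at_summable) 
       (use assms H_d[of a] in \<open>auto simp: dn_def\<close>)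
  thus ?thesis unfolding e .
qed

lemma G_sums:
  assumes "a > 0"
  shows "gt a sums Gs a" "a * Gs a = shifted_harmonic a ^ 2 + Aa a"
proof -
  have "summable (\<lambda>n. a * gt a n)" using aG_sums[OF assms] by (rule sums_summable)
  hence "summable (gt a)" using assms by (subst (asm) summable_cmult_iff) auto
  thus "gt a sums Gs a" unfolding Gs_def by (rule summable_sums)
  hence "(\<lambda>n. a * gt a n) sums (a * Gs a)" by (rule sums_mult)
  thus "a * Gs a = shifted_harmonic a ^ 2 + Aa a"
    using aG_sums[OF assms] sums_unique2 by (simp add: power2_eq_square) 
qed



lemma H_over_lim:
  assumes "a > 0"
  shows "(\<lambda>N. shifted_harmonic (real N + a) / (real N + 1 + a)) \<longlonglongrightarrow> 0"
proof (rule tendsto_sandwich[of "\<lambda>_. 0" _ _ "\<lambda>N. shifted_harmonic a * (1 / (real N + 1)) + harm N / (real N + 1)"])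
  show "\<forall>\<^sub>F N in sequentially. 0 \<le> shifted_harmonic (real N + a) / (real N + 1 + a)"
    using assms by (intro always_eventually allI divide_nonneg_pos H_nonneg) auto
  show "\<forall>\<^sub>F N in sequentially. shifted_harmonic (real N + a) / (real N + 1 + a)
        \<le> shifted_harmonic a * (1 / (real N + 1)) + harm N / (real N + 1)"
  proof (intro always_eventually allI)
    fix N
    have "shifted_harmonic (real N + a) / (real N + 1 + a) \<le> shifted_harmonic (real N + a) / (real N + 1)"
      using assms H_nonneg[of "real N + a"] by (intro divide_left_mono) auto
    also have "\<dots> \<le> (shifted_harmonic a + harm N) / (real N + 1)"
      using assms H_Tn[of a N] Tn_le_harm[of a N] by (intro divide_right_mono) auto
    finally show "shifted_harmonic (real N + a) / (real N + 1 + a)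
        \<le> shifted_harmonic a * (1 / (real N + 1)) + harm N / (real N + 1)"
      by (simp add: add_divide_distrib)
  qed
  have "(\<lambda>N. 1 / (real N + 1)) \<longlonglongrightarrow> (0::real)" by real_asymp
  thus "(\<lambda>N. shifted_harmonic a * (1 / (real N + 1)) + harm N / (real N + 1)) \<longlonglongrightarrow> 0"
    using harm_over tendsto_add tendsto_mult_right_zero by fastforce
qed auto

lemma FE_G:
  assumes "a > 0"
  shows "(a+1) * Gs (a+1) - a * Gs a = 2 * shifted_harmonic (a+1) / (a+1)"
proof -
  define c where "c n = (a+1) * gt (a+1) n - a * gt a n" for n
  define H where "H = shifted_harmonic"
  define P where "P N = H a / (1+a) + 1/(1+a)^2 - 1/(real N + 1 + a)^2 - H (real N + a) / (real N + 1 + a)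
     + (\<Sum>n<N. 1 / (real (n+1) * (real (n+1) + (a+1))))" for N
  have c_sums: "c sums ((a+1) * Gs (a+1) - a * Gs a)"
    unfolding c_def using assms by (intro sums_diff sums_mult G_sums) auto
  have part: "(\<Sum>n<N. c n) = P N" for N
  proof (induction N)
    case 0 then show ?case by (simp add: P_def)
  next
    case (Suc N)
    define h0 where "h0 = H (real N + a)"
    have e1: "H (real (N+1) + a) = h0 + 1 / (real N + a + 1)"
      unfolding h0_def H_def using H_shift1[of "real N + a"] assms by (simp add: add_ac)
    have e2: "H (real (N+1) + (a+1)) = H (real (N+1) + a) + 1 / (real N + a + 2)"
      unfolding H_def using H_shift1[of "real (N+1) + a"] assms by (simp add: add_ac)
    have e3: "H (real (Suc N) + a) = H (real (N+1) + a)" by simp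
    have cN: "c N = H (real (N+1) + (a+1)) / (real N + 1) - H (real (N+1) + (a+1)) / (real N + a + 2)
           - (H (real (N+1) + a) / (real N + 1) - H (real (N+1) + a) / (real N + a + 1))"
      unfolding c_def gt_def H_def using assms by (simp add: field_simps)
    define p where "p = real N + 1"
    define q where "q = real N + a + 1"
    define r where "r = real N + a + 2"
    have nz: "p \<noteq> 0" "q \<noteq> 0" "r \<noteq> 0" unfolding p_def q_def r_def using assms by auto
    have H1v: "H (real (N+1) + a) = h0 + 1/q" unfolding e1 q_def ..
    have H2v: "H (real (N+1) + (a+1)) = h0 + 1/q + 1/r" unfolding e2 H1v r_def ..
    have cN': "c N = (h0 + 1/q + 1/r)/p - (h0 + 1/q + 1/r)/r - ((h0 + 1/q)/p - (h0 + 1/q)/q)"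
      unfolding cN H1v H2v p_def[symmetric] q_def[symmetric] r_def[symmetric] ..
    have s1: "real (Suc N) + 1 + a = r" unfolding r_def by simp
    have s2: "H (real (Suc N) + a) = h0 + 1/q" using H1v by simp
    have s3: "real N + 1 + a = q" unfolding q_def by simp
    have s4: "H (real N + a) = h0" unfolding h0_def ..
    have s5: "real (N+1) = p" unfolding p_def by simp
    have s6: "p + (a+1) = r" unfolding p_def r_def by simp
    have PS: "P (Suc N) = P N + (- (1/r^2) + 1/q^2 - (h0 + 1/q)/r + h0/q + 1/(p*r))"
      unfolding P_def sum.lessThan_Suc s1 s2 s3 s4 s5 s6 by simp
    have alg: "(h0 + 1/q + 1/r)/p - (h0 + 1/q + 1/r)/r - ((h0 + 1/q)/p - (h0 + 1/q)/q)
        = - (1/r^2) + 1/q^2 - (h0 + 1/q)/r + h0/q + 1/(p*r)"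
      using nz by (simp add: field_simps power2_eq_square)
    show ?case using Suc PS alg cN' by simp
  qed
  have lim: "P \<longlonglongrightarrow> H a / (1+a) + 1/(1+a)^2 - 0 - 0 + H (a+1) / (a+1)"
  proof -
    have "(\<lambda>k. (a+1) / (real (k+1) * (real (k+1) + (a+1))) / (a+1)) sums (H (a+1) / (a+1))"
      unfolding H_def using assms by (intro sums_divide H_d) auto
    hence s: "(\<lambda>k. 1 / (real (k+1) * (real (k+1) + (a+1)))) sums (H (a+1) / (a+1))"
      using assms by simp
    show ?thesis unfolding P_def
      using s[unfolded sums_def] H_over_lim[OF assms] lim_inv_sq[OF assms]
      unfolding H_def by (intro tendsto_intros) auto
  qed
  have "c sums (H a / (1+a) + 1/(1+a)^2 - 0 - 0 + H (a+1) / (a+1))"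
    unfolding sums_def part using lim .
  hence "(a+1) * Gs (a+1) - a * Gs a = H a / (1+a) + 1/(1+a)^2 + H (a+1) / (a+1)"
    using c_sums sums_unique2 by fastforce
  also have "\<dots> = 2 * H (a+1) / (a+1)"
  proof -
    define t where "t = a + 1"
    define h1 where "h1 = H (a+1)"
    have t: "t > 0" unfolding t_def using assms by simp
    have ha: "H a = h1 - 1/t" unfolding h1_def t_def H_def using H_shift1[of a] assms by simp
    have ta: "1 + a = t" unfolding t_def by simp
    have "(h1 - 1/t) / t + 1/t^2 + h1/t = 2 * h1 / t"
      using t by (simp add: field_simps power2_eq_square)
    moreover have "H a / (1+a) + 1/(1+a)^2 + H (a+1) / (a+1) = (h1 - 1/t) / t + 1/t^2 + h1/t"
      unfolding ha unfolding h1_def t_def by (simp add: add_ac)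
    moreover have "2 * h1 / t = 2 * H (a+1) / (a+1)" unfolding h1_def t_def ..
    ultimately show ?thesis by simp
  qed
  finally show ?thesis unfolding H_def .
qed

definition Phi :: "real \<Rightarrow> real" where "Phi a = Aa a - shifted_harmonic_gen 2 a"

lemma Phi_period: assumes "a > 0" shows "Phi (a + 1) = Phi a"
proof -
  have g1: "(a+1) * Gs (a+1) = shifted_harmonic (a+1) ^ 2 + Aa (a+1)" using G_sums(2)[of "a+1"] assms by simp
  have g0: "a * Gs a = shifted_harmonic a ^ 2 + Aa a" using G_sums(2)[of a] assms by simp
  define h1 where "h1 = shifted_harmonic (a+1)"
  define e where "e = 1 / (a+1)"
  have hh: "shifted_harmonic a = h1 - e" unfolding h1_def e_def using H_shift1[of a] assms by simp
  have fe: "(a+1) * Gs (a+1) = a * Gs a + 2 * h1 * e"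
    using FE_G[OF assms] unfolding h1_def e_def by simp
  have "Aa (a+1) = (h1 - e)^2 + Aa a + 2 * h1 * e - h1^2"
    using g1 g0 fe hh unfolding h1_def by simp
  also have "\<dots> = Aa a + e^2" by (simp add: power2_eq_square algebra_simps)
  finally have "Aa (a+1) = Aa a + 1/(a+1)^2" unfolding e_def by (simp add: power_divide)
  thus ?thesis unfolding Phi_def using H2_shift1[of a] assms by simp
qed

lemma Phi_periodn: assumes "a > 0" shows "Phi (a + real N) = Phi a"
proof (induction N)
  case (Suc N)
  have "Phi (a + real (Suc N)) = Phi ((a + real N) + 1)" by (simp add: add_ac)
  also have "\<dots> = Phi (a + real N)" using assms by (intro Phi_period) auto
  finally show ?case using Suc by simp
qed simp



lemma Tn_ratio:
  assumes "0 < x" "x \<le> y"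
  shows "(x/y) * Tn x m \<le> Tn y m" "Tn y m \<le> Tn x m"
proof -
  have t1: "(x/y) * (1 / (real i + 1 + x)) \<le> 1 / (real i + 1 + y)" for i
  proof -
    have "x * (real i + 1) \<le> y * (real i + 1)" using assms by (intro mult_right_mono) auto
    hence le: "x * (real i + 1 + y) \<le> y * (real i + 1 + x)" by (simp add: algebra_simps)
    have "x / (y * (real i + 1 + x)) \<le> 1 / (real i + 1 + y)"
      using le assms by (intro frac_cross) auto
    thus ?thesis by simp
  qed
  show "(x/y) * Tn x m \<le> Tn y m" unfolding Tn_def sum_distrib_left by (intro sum_mono t1)
  show "Tn y m \<le> Tn x m" unfolding Tn_def using assms by (intro sum_mono divide_left_mono) auto
qed

lemma dn_ratio:
  assumes "0 < x" "x \<le> y"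
  shows "dn x n \<le> dn y n" "dn y n \<le> (y/x) * dn x n"
proof -
  define N where "N = real (n+1)"
  have N: "N \<ge> 1" unfolding N_def by simp
  have "x * N \<le> y * N" using assms N by (intro mult_right_mono) auto
  hence le: "x * (N + y) \<le> y * (N + x)" by (simp add: algebra_simps)
  hence "N * (x * (N + y)) \<le> N * (y * (N + x))" by (rule mult_left_mono) (use N in auto)
  hence "x * (N * (N + y)) \<le> y * (N * (N + x))" by (simp add: ac_simps)
  hence "x / (N * (N + x)) \<le> y / (N * (N + y))" using assms N by (intro frac_cross) auto
  thus "dn x n \<le> dn y n" unfolding dn_def N_def[symmetric] .
  have "y / (N * (N + y)) \<le> y / (N * (N + x))" using assms N by (intro divide_left_mono mult_left_mono) auto
  thus "dn y n \<le> (y/x) * dn x n" unfolding dn_def N_def[symmetric] using assms N by simp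
qed

lemma at_ratio:
  assumes "0 < x" "x \<le> y"
  shows "(x/y) * atm x n \<le> atm y n" "atm y n \<le> (y/x) * atm x n"
proof -
  have "(x/y) * atm x n = ((x/y) * Tn x (n+1)) * dn x n" unfolding atm_def by simp
  also have "\<dots> \<le> Tn y (n+1) * dn y n"
    using assms Tn_ratio[OF assms] dn_ratio[OF assms] dn_nonneg[of x] Tn_nonneg[of y]
    by (intro mult_mono) auto
  finally show "(x/y) * atm x n \<le> atm y n" unfolding atm_def .
  have "atm y n \<le> Tn x (n+1) * ((y/x) * dn x n)"
    unfolding atm_def
    using assms Tn_ratio[OF assms] dn_ratio[OF assms] dn_nonneg[of y] Tn_nonneg[of x]
    by (intro mult_mono) auto
  thus "atm y n \<le> (y/x) * atm x n" unfolding atm_def by (simp add: algebra_simps)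
qed

lemma at_sums: "a \<ge> 0 \<Longrightarrow> atm a sums Aa a"
  unfolding Aa_def by (intro summable_sums at_summable)

lemma Aa_nonneg: "a \<ge> 0 \<Longrightarrow> Aa a \<ge> 0"
  by (rule sums_le[OF _ sums_zero at_sums]) (rule at_nonneg)

lemma Aa_ratio:
  assumes "0 < x" "x \<le> y"
  shows "(x/y) * Aa x \<le> Aa y" "Aa y \<le> (y/x) * Aa x"
proof -
  have x: "x \<ge> 0" "y \<ge> 0" using assms by auto
  show "(x/y) * Aa x \<le> Aa y"
    by (rule sums_le[OF _ sums_mult[OF at_sums[OF x(1)]] at_sums[OF x(2)]]) (rule at_ratio(1)[OF assms])
  show "Aa y \<le> (y/x) * Aa x"
    by (rule sums_le[OF _ at_sums[OF x(2)] sums_mult[OF at_sums[OF x(1)]]]) (rule at_ratio(2)[OF assms])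
qed

lemma Aa_small:
  assumes "0 < e" "e \<le> 1"
  shows "Aa e \<le> 4 * e * Aa 1"
proof -
  have t: "atm e n \<le> (4*e) * atm 1 n" for n
  proof -
    have T: "Tn e m \<le> 2 * Tn 1 m" for m
      unfolding Tn_def sum_distrib_left
    proof (intro sum_mono)
      fix i
      have "1 / (real i + 1 + e) \<le> 1 / (real i + 1)" using assms by (intro divide_left_mono) auto
      also have "\<dots> \<le> 2 * (1 / (real i + 1 + 1))" by (simp add: field_simps)
      finally show "1 / (real i + 1 + e) \<le> 2 * (1 / (real i + 1 + 1))" .
    qed
    have D: "dn e n \<le> (2*e) * dn 1 n"
    proof -
      define N where "N = real (n+1)"
      have N: "N \<ge> 1" unfolding N_def by simp
      have "e / (N * (N + e)) \<le> e / (N * N)" using assms N by (intro divide_left_mono mult_left_mono) auto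
      also have "\<dots> \<le> (2*e) * (1 / (N * (N + 1)))"
      proof -
        have "N * (N+1) \<le> 2 * (N * N)" using N by (simp add: algebra_simps power2_eq_square)
        hence le: "N * (N+1) / 2 \<le> N * N" by simp
        have q: "(2*e) * (1 / (N * (N + 1))) = e / (N * (N+1) / 2)" by simp
        show ?thesis unfolding q by (rule frac_le) (use le assms N in auto)
      qed
      finally show ?thesis unfolding dn_def N_def[symmetric] by simp
    qed
    have "atm e n \<le> (2 * Tn 1 (n+1)) * ((2*e) * dn 1 n)"
      unfolding atm_def using T D assms Tn_nonneg dn_nonneg by (intro mult_mono) auto
    thus ?thesis unfolding atm_def by (simp add: algebra_simps)
  qed
  have x: "e \<ge> 0" "(1::real) \<ge> 0" using assms by auto
  show ?thesis using sums_le[OF _ at_sums[OF x(1)] sums_mult[OF at_sums[OF x(2)]]] t by simp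
qed

lemma Phi_const_le:
  assumes "0 < m" "m \<le> M"
  shows "Phi M = Phi m"
proof -
  define c where "c = \<bar>Phi m\<bar>"
  define r where "r N = (M - m) / (m + real N)" for N
  define B where "B N = r N * (c + Zc) + ((1 + r N)^2 - 1) * Zc" for N
  have bound: "\<bar>Phi M - Phi m\<bar> \<le> B N" for N
  proof -
    define x where "x = m + real N"
    define y where "y = M + real N"
    have xy: "0 < x" "x \<le> y" unfolding x_def y_def using assms by auto
    have ratio: "y / x = 1 + r N" unfolding r_def x_def y_def using xy(1) unfolding x_def
      by (simp add: field_simps)
    have r0: "r N \<ge> 0" unfolding r_def using assms by simp
    have PM: "Phi M = Phi y" "Phi m = Phi x" unfolding x_def y_def using assms
      by (simp_all add: Phi_periodn)
    have Ax: "Aa x \<le> c + Zc"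
    proof -
      have "Aa x = Phi x + shifted_harmonic_gen 2 x" unfolding Phi_def by simp
      thus ?thesis using PM H2_bounds[of x] xy unfolding c_def by auto
    qed
    have A1: "Aa y - Aa x \<le> r N * Aa x" using Aa_ratio(2)[OF xy] ratio by (simp add: algebra_simps)
    have A2: "Aa x - Aa y \<le> r N * Aa x"
    proof -
      have "(y-x)/y \<le> (y-x)/x" using xy by (intro divide_left_mono) auto
      moreover have "(y-x)/y = 1 - x/y" "(y-x)/x = y/x - 1" using xy by (simp_all add: field_simps)
      ultimately have "(1 - x/y) \<le> y/x - 1" by simp
      hence "(1 - x/y) * Aa x \<le> r N * Aa x" using ratio Aa_nonneg[of x] xy by (intro mult_right_mono) auto
      thus ?thesis using Aa_ratio(1)[OF xy] by (simp add: algebra_simps)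
    qed
    have absA: "\<bar>Aa y - Aa x\<bar> \<le> r N * (c + Zc)"
      using A1 A2 Ax r0 mult_left_mono[OF Ax r0] by linarith
    have H1: "\<bar>shifted_harmonic_gen 2 y - shifted_harmonic_gen 2 x\<bar> \<le> ((1 + r N)^2 - 1) * Zc"
    proof -
      have "shifted_harmonic_gen 2 y - shifted_harmonic_gen 2 x \<le> ((y/x)^2 - 1) * shifted_harmonic_gen 2 x"
        using H2_ratio(2)[OF xy] by (simp add: algebra_simps)
      also have "\<dots> \<le> ((y/x)^2 - 1) * Zc"
      proof (rule mult_left_mono)
        show "shifted_harmonic_gen 2 x \<le> Zc" using H2_bounds[of x] xy by auto
        have "1 \<le> y/x" using xy by simp
        hence "1 \<le> (y/x)^2" by (simp add: one_le_power)
        thus "0 \<le> (y/x)^2 - 1" by simp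
      qed
      finally show ?thesis using H2_ratio(1)[OF xy] ratio by simp
    qed
    have "Phi M - Phi m = Phi y - Phi x" using PM by simp
    also have "\<dots> = (Aa y - Aa x) - (shifted_harmonic_gen 2 y - shifted_harmonic_gen 2 x)"
      unfolding Phi_def by simp
    finally have "\<bar>Phi M - Phi m\<bar> = \<bar>(Aa y - Aa x) - (shifted_harmonic_gen 2 y - shifted_harmonic_gen 2 x)\<bar>"
      by simp
    also have "\<dots> \<le> r N * (c + Zc) + ((1 + r N)^2 - 1) * Zc" using absA H1 by linarith
    finally show ?thesis unfolding B_def .
  qed
  have "r \<longlonglongrightarrow> 0" unfolding r_def using assms by real_asymp
  hence "B \<longlonglongrightarrow> 0 * (c + Zc) + ((1 + 0)^2 - 1) * Zc" unfolding B_def by (intro tendsto_intros)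
  hence "B \<longlonglongrightarrow> 0" by simp
  hence "\<bar>Phi M - Phi m\<bar> \<le> 0" by (rule LIMSEQ_le_const) (use bound in auto)
  thus ?thesis by simp
qed

lemma Phi_zero:
  assumes "b > 0"
  shows "Phi b = 0"
proof -
  have const: "Phi b = Phi q" if "q > 0" for q
    using Phi_const_le[of b q] Phi_const_le[of q b] assms that by (cases "b \<le> q") auto
  define C where "C = 4 * (Aa 1 + shifted_harmonic_gen 2 1)"
  have bnd: "\<bar>Phi b\<bar> \<le> C * (1 / (real n + 1))" for n
  proof -
    define e where "e = 1 / (real n + 1)"
    have e: "0 < e" "e \<le> 1" unfolding e_def by (auto simp: field_simps)
    have "\<bar>Phi b\<bar> = \<bar>Aa e - shifted_harmonic_gen 2 e\<bar>" using const[of e] e unfolding Phi_def by simp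
    also have "\<dots> \<le> Aa e + shifted_harmonic_gen 2 e"
      using Aa_nonneg[of e] H2_bounds(1)[of e] e by linarith
    also have "\<dots> \<le> 4 * e * Aa 1 + 4 * e * shifted_harmonic_gen 2 1"
      using Aa_small[OF e] H2_small[OF e] by linarith
    also have "\<dots> = C * e" unfolding C_def by (simp add: algebra_simps)
    finally show ?thesis unfolding e_def .
  qed
  have "(\<lambda>n. C * (1 / (real n + 1))) \<longlonglongrightarrow> C * 0" by (intro tendsto_intros) real_asymp
  hence "\<bar>Phi b\<bar> \<le> C * 0" by (rule LIMSEQ_le_const) (use bnd in auto)
  thus ?thesis by simp
qed

lemma k0_case:
  assumes "b > 0"
  shows "gt b sums ((shifted_harmonic b ^ 2 + shifted_harmonic_gen 2 b) / b)"
proof -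
  have "Aa b = shifted_harmonic_gen 2 b" using Phi_zero[OF assms] unfolding Phi_def by simp
  hence "Gs b = (shifted_harmonic b ^ 2 + shifted_harmonic_gen 2 b) / b"
    using G_sums(2)[OF assms] assms by (simp add: field_simps)
  thus ?thesis using G_sums(1)[OF assms] by simp
qed



lemma sum_shift1: "(\<Sum>i<(k::nat). f (i+1)) = (\<Sum>j=1..k. f j)"
  by (induction k) auto

theorem mainTheorem6:
  fixes k :: nat and \<alpha> :: real
  assumes "\<alpha> > real k"
  shows "(\<lambda>n. shifted_harmonic (real (n + 1) + \<alpha>)
               / ((real (n + 1) + real k) * (real (n + 1) + \<alpha>)))
         sums ((shifted_harmonic (\<alpha> - real k) ^ 2 + shifted_harmonic_gen 2 (\<alpha> - real k))
                 / (\<alpha> - real k)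
               - (\<Sum>j = 1..k. shifted_harmonic (\<alpha> + real j - real k)
                               / (real j * (\<alpha> + real j - real k))))"
proof -
  define b where "b = \<alpha> - real k"
  have b: "b > 0" unfolding b_def using assms by simp
  have eq: "(\<lambda>n. shifted_harmonic (real (n + 1) + \<alpha>)
               / ((real (n + 1) + real k) * (real (n + 1) + \<alpha>))) = (\<lambda>n. gt b (n + k))"
    unfolding gt_def b_def by (rule ext) (simp add: algebra_simps)
  have s: "(\<Sum>i<k. gt b i) = (\<Sum>j = 1..k. shifted_harmonic (\<alpha> + real j - real k)
                               / (real j * (\<alpha> + real j - real k)))"
  proof -
    define F where "F j = shifted_harmonic (\<alpha> + real j - real k) / (real j * (\<alpha> + real j - real k))" for j :: nat
    have "(\<Sum>i<k. gt b i) = (\<Sum>i<k. F (i+1))"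
      unfolding gt_def b_def F_def by (intro sum.cong) (auto simp: algebra_simps)
    also have "\<dots> = (\<Sum>j=1..k. F j)" by (rule sum_shift1)
    finally show ?thesis unfolding F_def .
  qed
  have "(\<lambda>n. gt b (n + k)) sums ((shifted_harmonic b ^ 2 + shifted_harmonic_gen 2 b) / b - (\<Sum>i<k. gt b i))"
    using k0_case[OF b] by (subst sums_iff_shift) simp
  hence "(\<lambda>n. gt b (n + k)) sums ((shifted_harmonic b ^ 2 + shifted_harmonic_gen 2 b) / b
     - (\<Sum>j = 1..k. shifted_harmonic (\<alpha> + real j - real k) / (real j * (\<alpha> + real j - real k))))"
    unfolding s .
  thus ?thesis unfolding eq b_def .
qed


end
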